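(* Let $H$ be the face algebra described in the context. Then the braided Hopf algebra ${}_RH=C_H(H_s)$ is the $\mathbb C$-linear span of $\{X^i_i(p):i,p\in\mathbb Z_N\}$, with $$X^i_i(p)X^k_k(q)=\delta_{i,k}\delta_{p,q}X^i_i(p),\qquad 1=\sum_{i,p}X^i_i(p),$$ $$\underline\Delta(X^k_k(s))=\sum_{w+q=s}X^k_k(w)\otimes X^k_k(q),\qquad \varepsilon_t(X^i_i(s))=\delta_{s,0}\sum_pX^i_i(p),\qquad \underline S(X^k_k(s))=X^k_k(-s).$$
   Context: Let $N\ge2$, $\mathbb Z_N=\mathbb Z/N\mathbb Z$, $\omega\in\mathbb C$ a primitive $N$th root of unity. $H$ is the $\mathbb C$-vector space with basis $\{X^i_j(s):i,j,s\in\mathbb Z_N\}$, with multiplication $X^i_j(p)X^k_l(q)=\delta_{j,k}\delta_{p,q}X^i_l(p)$, unit $1=\sum_{i,p}X^i_i(p)$, comultiplication $\Delta(X^i_j(s))=\sum_{p+q=s}X^i_j(p)\otimes X^{i+p}_{j+p}(q)$, counit $\varepsilon(X^i_j(s))=\delta_{s,0}$, antipode $S(X^i_j(p))=X^{j+p}_{i+p}(-p)$, and $R=\sum_{i,j,p}X^i_j(p)\otimes X^j_{j+p}(i-j)\omega^{-p(i-j)}$, $\bar R=\sum_{i,j,p}X^{j+p}_{i+p}(-p)\otimes X^j_{j+p}(i-j)\omega^{-p(i-j)}$; $(H,R)$ is a quasitriangular weak Hopf algebra (Hayashi's face algebra). Its target subalgebra $H_t=\varepsilon_t(H)$, $\varepsilon_t(h)=\varepsilon(1_1h)1_2$,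 is $\bigoplus_i\mathbb C1^i$ with $1^i=\sum_pX^i_i(p)$; $\varepsilon_s(h)=1_1\varepsilon(h1_2)$, $H_s=\varepsilon_s(H)$. For a quasitriangular weak Hopf algebra, ${}_RH$ denotes $C_H(H_s)=\{1_1hS(1_2):h\in H\}$ with adjoint action $h\cdot x=h_1xS(h_2)$, multiplication $a\otimes b\mapsto(1_1\cdot a)(1_2\cdot b)$, comultiplication $\underline\Delta(x)=x_1S(R^2)\otimes R^1\cdot x_2$, counit $\varepsilon_t$, antipode $\underline S(x)=R^2R'^2S(R^1xS(R'^1))$ ($R'$ another copy of $R$). *)

theory Defs
  imports Complex_Main
begin

text \<open>Indices are integers read modulo N;
  the canonical basis labels are B N = {0..<N}^3. An element of H is a function
  on int*int*int with complex values vanishing outside B N (its coordinates in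
  the basis X^i_j(s)); an element of H (x) H is a function on pairs of labels
  (coordinates in the basis X_x (x) X_y).\<close>

type_synonym lbl = "int \<times> int \<times> int"
type_synonym hvec = "lbl \<Rightarrow> complex"
type_synonym tvec = "lbl \<times> lbl \<Rightarrow> complex"

definition B :: "int \<Rightarrow> lbl set" where
  "B N = {0..<N} \<times> {0..<N} \<times> {0..<N}"

definition Hsp :: "int \<Rightarrow> hvec set" where
  "Hsp N = {f. \<forall>x. x \<notin> B N \<longrightarrow> f x = 0}"

definition Xv :: "int \<Rightarrow> int \<Rightarrow> int \<Rightarrow> int \<Rightarrow> hvec" where
  "Xv N i j s = (\<lambda>x. if x = (i mod N, j mod N, s mod N) then 1 else 0)"

definition Xb :: "int \<Rightarrow> lbl \<Rightarrow> hvec" where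
  "Xb N x = (case x of (i, j, s) \<Rightarrow> Xv N i j s)"

definition tens :: "hvec \<Rightarrow> hvec \<Rightarrow> tvec" where
  "tens a b = (\<lambda>(x, y). a x * b y)"

definition mX :: "int \<Rightarrow> lbl \<Rightarrow> lbl \<Rightarrow> hvec" where
  "mX N x y = (case x of (i, j, p) \<Rightarrow> case y of (k, l, q) \<Rightarrow>
     if j mod N = k mod N \<and> p mod N = q mod N then Xv N i l p else (\<lambda>_. 0))"

definition hmult :: "int \<Rightarrow> hvec \<Rightarrow> hvec \<Rightarrow> hvec" where
  "hmult N a b = (\<lambda>z. \<Sum>x\<in>B N. \<Sum>y\<in>B N. a x * b y * mX N x y z)"

definition Hone :: "int \<Rightarrow> hvec" where
  "Hone N = (\<lambda>z. \<Sum>i\<in>{0..<N}. \<Sum>p\<in>{0..<N}. Xv N i i p z)"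

definition DX :: "int \<Rightarrow> lbl \<Rightarrow> tvec" where
  "DX N x = (case x of (i, j, s) \<Rightarrow> (\<lambda>w. \<Sum>p\<in>{0..<N}. \<Sum>q\<in>{0..<N}.
     if (p + q) mod N = s mod N then tens (Xv N i j p) (Xv N (i + p) (j + p) q) w else 0))"

definition Delta :: "int \<Rightarrow> hvec \<Rightarrow> tvec" where
  "Delta N a = (\<lambda>w. \<Sum>x\<in>B N. a x * DX N x w)"

definition epsX :: "int \<Rightarrow> lbl \<Rightarrow> complex" where
  "epsX N x = (case x of (i, j, s) \<Rightarrow> if s mod N = 0 then 1 else 0)"

definition eps :: "int \<Rightarrow> hvec \<Rightarrow> complex" where
  "eps N a = (\<Sum>x\<in>B N. a x * epsX N x)"

definition SX :: "int \<Rightarrow> lbl \<Rightarrow> hvec" where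
  "SX N x = (case x of (i, j, p) \<Rightarrow> Xv N (j + p) (i + p) (- p))"

definition Sant :: "int \<Rightarrow> hvec \<Rightarrow> hvec" where
  "Sant N a = (\<lambda>z. \<Sum>x\<in>B N. a x * SX N x z)"

definition Rmat :: "int \<Rightarrow> complex \<Rightarrow> tvec" where
  "Rmat N \<omega> = (\<lambda>w. \<Sum>i\<in>{0..<N}. \<Sum>j\<in>{0..<N}. \<Sum>p\<in>{0..<N}.
     tens (Xv N i j p) (Xv N j (j + p) (i - j)) w * \<omega> powi (- (p * (i - j))))"

text \<open>counital maps: eps_t(h) = eps(1_1 h) 1_2, eps_s(h) = 1_1 eps(h 1_2)\<close>
definition eps_t :: "int \<Rightarrow> hvec \<Rightarrow> hvec" where
  "eps_t N h = (\<lambda>z. \<Sum>(x, y)\<in>B N \<times> B N.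
     Delta N (Hone N) (x, y) * eps N (hmult N (Xb N x) h) * Xb N y z)"

definition eps_s :: "int \<Rightarrow> hvec \<Rightarrow> hvec" where
  "eps_s N h = (\<lambda>z. \<Sum>(x, y)\<in>B N \<times> B N.
     Delta N (Hone N) (x, y) * eps N (hmult N h (Xb N y)) * Xb N x z)"

definition Hs :: "int \<Rightarrow> hvec set" where
  "Hs N = eps_s N ` Hsp N"

definition RH :: "int \<Rightarrow> hvec set" where
  "RH N = {a \<in> Hsp N. \<forall>y\<in>Hs N. hmult N a y = hmult N y a}"

text \<open>adjoint action h . x = h_1 x S(h_2)\<close>
definition adj :: "int \<Rightarrow> hvec \<Rightarrow> hvec \<Rightarrow> hvec" where
  "adj N h a = (\<lambda>z. \<Sum>(x, y)\<in>B N \<times> B N.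
     Delta N h (x, y) * hmult N (hmult N (Xb N x) a) (Sant N (Xb N y)) z)"

text \<open>braided multiplication a (x) b -> (1_1 . a)(1_2 . b)\<close>
definition bmult :: "int \<Rightarrow> hvec \<Rightarrow> hvec \<Rightarrow> hvec" where
  "bmult N a b = (\<lambda>z. \<Sum>(x, y)\<in>B N \<times> B N.
     Delta N (Hone N) (x, y) * hmult N (adj N (Xb N x) a) (adj N (Xb N y) b) z)"

text \<open>braided comultiplication x -> x_1 S(R^2) (x) R^1 . x_2\<close>
definition bDelta :: "int \<Rightarrow> complex \<Rightarrow> hvec \<Rightarrow> tvec" where
  "bDelta N \<omega> a = (\<lambda>w. \<Sum>(x1, x2)\<in>B N \<times> B N. \<Sum>(r1, r2)\<in>B N \<times> B N.
     Delta N a (x1, x2) * Rmat N \<omega> (r1, r2) *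
     tens (hmult N (Xb N x1) (Sant N (Xb N r2))) (adj N (Xb N r1) (Xb N x2)) w)"

text \<open>braided antipode x -> R^2 R'^2 S(R^1 x S(R'^1))\<close>
definition bS :: "int \<Rightarrow> complex \<Rightarrow> hvec \<Rightarrow> hvec" where
  "bS N \<omega> a = (\<lambda>z. \<Sum>(r1, r2)\<in>B N \<times> B N. \<Sum>(s1, s2)\<in>B N \<times> B N.
     Rmat N \<omega> (r1, r2) * Rmat N \<omega> (s1, s2) *
     hmult N (hmult N (Xb N r2) (Xb N s2))
       (Sant N (hmult N (hmult N (Xb N r1) a) (Sant N (Xb N s1)))) z)"

definition diag_span :: "int \<Rightarrow> hvec set" where
  "diag_span N = {(\<lambda>z. \<Sum>i\<in>{0..<N}. \<Sum>p\<in>{0..<N}. c i p * Xv N i i p z) | c. True}"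

end

theory Submission
  imports Defs
begin


lemma mod_triv: "0 \<le> (a::int) \<Longrightarrow> a < N \<Longrightarrow> a mod N = a" by simp

lemma mod_in: "(a::int) \<in> {0..<N} \<Longrightarrow> a mod N = a" by simp

lemma Xv_mod[simp]:
  "Xv N (i mod N) j s = Xv N i j s" "Xv N i (j mod N) s = Xv N i j s" "Xv N i j (s mod N) = Xv N i j s"
  "Xv N (i mod N + a) j s = Xv N (i + a) j s" "Xv N i (j mod N + a) s = Xv N i (j + a) s"
  "Xv N i j (s mod N + a) = Xv N i j (s + a)"
  by (simp_all add: Xv_def mod_add_left_eq)

lemma Xv_cong: "i mod N = i' mod N \<Longrightarrow> j mod N = j' mod N \<Longrightarrow> s mod N = s' mod N \<Longrightarrow> Xv N i j s = Xv N i' j' s'"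
  by (simp add: Xv_def)

lemma Xv_cong_app: "i mod N = i' mod N \<Longrightarrow> j mod N = j' mod N \<Longrightarrow> s mod N = s' mod N \<Longrightarrow> Xv N i j s z = Xv N i' j' s' z"
  by (simp add: Xv_def)

lemma mem_B: "0 < N \<Longrightarrow> (i mod N, j mod N, s mod N) \<in> B N"
  by (simp add: B_def)

lemma Xb_simp[simp]: "Xb N (a,b,c) = Xv N a b c" by (simp add: Xb_def)

lemma finite_B[simp]: "finite (B N)" by (simp add: B_def)

lemma sum_B_Xv: assumes "0 < N"
  shows "(\<Sum>x\<in>B N. Xv N i j s x * G x) = G (i mod N, j mod N, s mod N)"
proof -
  have "(\<Sum>x\<in>B N. Xv N i j s x * G x) = (\<Sum>x\<in>B N. if x = (i mod N, j mod N, s mod N) then G x else 0)"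
    by (rule sum.cong) (auto simp: Xv_def)
  also have "\<dots> = G (i mod N, j mod N, s mod N)" using mem_B[OF assms] by (simp add: sum.delta')
  finally show ?thesis .
qed

lemma sum_B_Xv': assumes "0 < N"
  shows "(\<Sum>x\<in>B N. G x * Xv N i j s x) = G (i mod N, j mod N, s mod N)"
  using sum_B_Xv[OF assms, of i j s G] by (simp add: mult.commute)

lemma sum_BB_tens: assumes "0 < N"
  shows "(\<Sum>(x,y)\<in>B N \<times> B N. tens (Xv N i j s) (Xv N k l q) (x,y) * G x y) = G (i mod N, j mod N, s mod N) (k mod N, l mod N, q mod N)"
proof -
  have "(\<Sum>(x,y)\<in>B N \<times> B N. tens (Xv N i j s) (Xv N k l q) (x,y) * G x y) = (\<Sum>x\<in>B N. \<Sum>y\<in>B N. Xv N i j s x * (Xv N k l q y * G x y))"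
    by (simp add: sum.cartesian_product[symmetric] tens_def mult.assoc)
  also have "\<dots> = (\<Sum>x\<in>B N. Xv N i j s x * G x (k mod N, l mod N, q mod N))"
    by (simp add: sum_B_Xv[OF assms] sum_distrib_left[symmetric])
  also have "\<dots> = G (i mod N, j mod N, s mod N) (k mod N, l mod N, q mod N)" by (simp add: sum_B_Xv[OF assms])
  finally show ?thesis .
qed

lemma if0_mult[simp]: "(if c then a else 0) * b = (if c then a * b else (0::complex))" by simp
lemma mult_if0[simp]: "b * (if c then a else 0) = (if c then b * a else (0::complex))" by simp
lemma sum_if0: "(\<Sum>x\<in>S. if c then f x else 0) = (if c then \<Sum>x\<in>S. f x else (0::complex))" by simp
lemma if_fun_app: "(if c then f else (\<lambda>_. 0)) z = (if c then f z else (0::complex))" by simp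

lemma sum2_delta: "finite A \<Longrightarrow> finite C \<Longrightarrow> c1 \<in> A \<Longrightarrow> c2 \<in> C \<Longrightarrow>
  (\<Sum>a\<in>A. \<Sum>b\<in>C. if a = c1 \<and> b = c2 then T else (0::complex)) = T"
proof -
  assume h: "finite A" "finite C" "c1 \<in> A" "c2 \<in> C"
  have "(\<Sum>a\<in>A. \<Sum>b\<in>C. if a = c1 \<and> b = c2 then T else (0::complex)) =
      (\<Sum>a\<in>A. if a = c1 then (\<Sum>b\<in>C. if b = c2 then T else 0) else 0)"
    by (intro sum.cong refl) auto
  also have "\<dots> = T" using h by (simp add: sum.delta')
  finally show ?thesis .
qed

lemma sum3_delta: "finite A \<Longrightarrow> finite C \<Longrightarrow> finite D \<Longrightarrow> c1 \<in> A \<Longrightarrow> c2 \<in> C \<Longrightarrow> c3 \<in> D \<Longrightarrow>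
  (\<Sum>a\<in>A. \<Sum>b\<in>C. \<Sum>d\<in>D. if a = c1 \<and> b = c2 \<and> d = c3 then T else (0::complex)) = T"
proof -
  assume h: "finite A" "finite C" "finite D" "c1 \<in> A" "c2 \<in> C" "c3 \<in> D"
  have "(\<Sum>a\<in>A. \<Sum>b\<in>C. \<Sum>d\<in>D. if a = c1 \<and> b = c2 \<and> d = c3 then T else (0::complex)) =
      (\<Sum>a\<in>A. if a = c1 then (\<Sum>b\<in>C. \<Sum>d\<in>D. if b = c2 \<and> d = c3 then T else 0) else 0)"
    by (intro sum.cong refl) auto
  also have "\<dots> = T" using h by (simp add: sum.delta' sum2_delta)
  finally show ?thesis .
qed

lemma sum_swap3: "(\<Sum>p\<in>P. \<Sum>a\<in>A. \<Sum>b\<in>C. g p a b) = (\<Sum>a\<in>A. \<Sum>b\<in>C. \<Sum>p\<in>P. g p a b)"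
proof -
  have "(\<Sum>p\<in>P. \<Sum>a\<in>A. \<Sum>b\<in>C. g p a b) = (\<Sum>a\<in>A. \<Sum>p\<in>P. \<Sum>b\<in>C. g p a b)" by (rule sum.swap)
  also have "\<dots> = (\<Sum>a\<in>A. \<Sum>b\<in>C. \<Sum>p\<in>P. g p a b)" by (rule sum.cong[OF refl], rule sum.swap)
  finally show ?thesis .
qed

lemma swap_pair: "(\<Sum>(x,y)\<in>A \<times> C. \<Sum>p\<in>P. g x y p) = (\<Sum>p\<in>P. \<Sum>(x,y)\<in>A \<times> C. g x y p)"
  by (subst sum.swap) (simp add: case_prod_beta)

locale NN = fixes N :: int assumes N: "0 < N" begin

lemma hmult_Xv: "hmult N (Xv N i j p) (Xv N k l q) =
   (if j mod N = k mod N \<and> p mod N = q mod N then Xv N i l p else (\<lambda>_. 0))"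
proof -
  have "hmult N (Xv N i j p) (Xv N k l q) = (\<lambda>z. mX N (i mod N, j mod N, p mod N) (k mod N, l mod N, q mod N) z)"
    unfolding hmult_def
    by (simp add: mult.assoc sum_distrib_left[symmetric] sum_B_Xv[OF N] sum_B_Xv'[OF N])
  then show ?thesis by (auto simp: mX_def intro: Xv_cong)
qed

lemma Sant_Xv: "Sant N (Xv N i j p) = Xv N (j + p) (i + p) (- p)"
  unfolding Sant_def by (simp add: sum_B_Xv[OF N] SX_def) (rule Xv_cong, simp_all add: mod_add_eq mod_minus_eq mod_add_right_eq)

lemma eps_Xv: "eps N (Xv N i j s) = (if s mod N = 0 then 1 else 0)"
  unfolding eps_def by (simp add: sum_B_Xv[OF N] epsX_def)

lemma Delta_Xv: "Delta N (Xv N i j s) = DX N (i mod N, j mod N, s mod N)"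
  unfolding Delta_def by (simp add: sum_B_Xv[OF N])

lemma swapBN: "(\<Sum>x\<in>B N. \<Sum>p\<in>{0..<N}. g x p) = (\<Sum>p\<in>{0..<N}. \<Sum>x\<in>B N. g x p)"
  by (rule sum.swap)

lemma Delta_sum: "(\<Sum>(x,y)\<in>B N \<times> B N. Delta N (Xv N i j s) (x,y) * F x y) =
  (\<Sum>p\<in>{0..<N}. \<Sum>q\<in>{0..<N}. if (p+q) mod N = s mod N
     then F (i mod N, j mod N, p) ((i+p) mod N, (j+p) mod N, q) else 0)"
proof -
  have "(\<Sum>(x,y)\<in>B N \<times> B N. Delta N (Xv N i j s) (x,y) * F x y) =
    (\<Sum>x\<in>B N. \<Sum>y\<in>B N. \<Sum>p\<in>{0..<N}. \<Sum>q\<in>{0..<N}. if (p+q) mod N = s mod N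
     then tens (Xv N (i mod N) (j mod N) p) (Xv N (i mod N + p) (j mod N + p) q) (x,y) * F x y else 0)"
    by (simp add: sum.cartesian_product[symmetric] Delta_Xv DX_def sum_distrib_right)
  also have "\<dots> = (\<Sum>p\<in>{0..<N}. \<Sum>q\<in>{0..<N}. \<Sum>x\<in>B N. \<Sum>y\<in>B N. if (p+q) mod N = s mod N
     then tens (Xv N (i mod N) (j mod N) p) (Xv N (i mod N + p) (j mod N + p) q) (x,y) * F x y else 0)"
    by (simp only: swapBN)
  also have "\<dots> = (\<Sum>p\<in>{0..<N}. \<Sum>q\<in>{0..<N}. if (p+q) mod N = s mod N
     then F (i mod N, j mod N, p) ((i+p) mod N, (j+p) mod N, q) else 0)"
  proof (intro sum.cong refl)
    fix p q assume pq: "p \<in> {0..<N}" "q \<in> {0..<N}"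
    show "(\<Sum>x\<in>B N. \<Sum>y\<in>B N. if (p+q) mod N = s mod N
     then tens (Xv N (i mod N) (j mod N) p) (Xv N (i mod N + p) (j mod N + p) q) (x,y) * F x y else 0)
     = (if (p+q) mod N = s mod N then F (i mod N, j mod N, p) ((i+p) mod N, (j+p) mod N, q) else 0)"
      using sum_BB_tens[OF N, of "i mod N" "j mod N" p "i mod N + p" "j mod N + p" q "\<lambda>x y. F x y"] pq
      by (simp add: sum.cartesian_product[symmetric] sum_if0 mod_add_left_eq)
  qed
  finally show ?thesis .
qed

lemma hmult_zero[simp]: "hmult N (\<lambda>_. 0) b = (\<lambda>_. 0)" "hmult N b (\<lambda>_. 0) = (\<lambda>_. 0)"
  by (simp_all add: hmult_def)

lemma hmult_if: "hmult N (if c then A else (\<lambda>_. 0)) C = (if c then hmult N A C else (\<lambda>_. 0))"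
  "hmult N C (if c then A else (\<lambda>_. 0)) = (if c then hmult N C A else (\<lambda>_. 0))"
  by simp_all

lemma adj_Xv: "adj N (Xv N i j p) (Xv N k l q) =
  (if p mod N = 0 \<and> j mod N = k mod N \<and> l mod N = k mod N then Xv N i i q else (\<lambda>_. 0))"
proof (rule ext)
  fix z
  have "adj N (Xv N i j p) (Xv N k l q) z = (\<Sum>a\<in>{0..<N}. \<Sum>b\<in>{0..<N}. if (a+b) mod N = p mod N
     then hmult N (hmult N (Xv N (i mod N) (j mod N) a) (Xv N k l q)) (Sant N (Xv N ((i+a) mod N) ((j+a) mod N) b)) z else 0)"
    unfolding adj_def Delta_sum apply (simp only: Xb_simp) done
  also have "\<dots> = (\<Sum>a\<in>{0..<N}. \<Sum>b\<in>{0..<N}. if (a+b) mod N = p mod N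
     then (if j mod N = k mod N \<and> a mod N = q mod N then (if l mod N = (j + a + b) mod N \<and> a mod N = (-b) mod N then Xv N i (i+a+b) a z else 0) else 0) else 0)"
    apply (simp only: hmult_Xv Sant_Xv)
    apply (simp only: hmult_if)
    apply (simp only: hmult_Xv)
    apply (simp only: if_fun_app)
    apply (simp only: mod_mod_trivial)
    apply (simp only: mod_add_left_eq)
    apply (simp only: Xv_mod)
    done
  also have "\<dots> = (\<Sum>a\<in>{0..<N}. \<Sum>b\<in>{0..<N}. if a = q mod N \<and> b = (-q) mod N then
       (if p mod N = 0 \<and> j mod N = k mod N \<and> l mod N = k mod N then Xv N i i q z else 0) else 0)"
  proof (intro sum.cong refl)
    fix a b assume a: "a \<in> {0..<N}" and b: "b \<in> {0..<N}"
    show "(if (a+b) mod N = p mod N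
     then (if j mod N = k mod N \<and> a mod N = q mod N then (if l mod N = (j + a + b) mod N \<and> a mod N = (-b) mod N then Xv N i (i+a+b) a z else 0) else 0) else 0)
      = (if a = q mod N \<and> b = (-q) mod N then
       (if p mod N = 0 \<and> j mod N = k mod N \<and> l mod N = k mod N then Xv N i i q z else 0) else 0)"
    proof (cases "a = q mod N \<and> b = (-q) mod N")
      case True
      have e1: "(a + b) mod N = 0" using True by (simp add: mod_add_eq)
      have e2: "(j + a + b) mod N = j mod N" using True
        by (metis add.assoc add.right_neutral e1 mod_add_right_eq)
      have e3: "a mod N = (-b) mod N" using True by (simp add: mod_minus_eq)
      have e2': "(i + a + b) mod N = i mod N" using True
        by (metis add.assoc add.right_neutral e1 mod_add_right_eq)
      have e4: "Xv N i (i+a+b) a = Xv N i i q" using True e2'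
        by (intro Xv_cong) simp_all
      show ?thesis using True e1 e2 e3 e4 by auto
    next
      case False
      have "\<not> (a mod N = q mod N \<and> a mod N = (-b) mod N)"
      proof
        assume h: "a mod N = q mod N \<and> a mod N = (-b) mod N"
        have "a = q mod N" using h a by simp
        moreover have "b = (-q) mod N"
        proof -
          have "b = b mod N" using b by simp
          also have "\<dots> = (- (-b)) mod N" by simp
          also have "\<dots> = (- ((-b) mod N)) mod N" by (simp add: mod_minus_eq)
          also have "\<dots> = (- (q mod N)) mod N" using h by metis
          also have "\<dots> = (-q) mod N" by (simp add: mod_minus_eq)
          finally show ?thesis .
        qed
        ultimately show False using False by simp
      qed
      then show ?thesis using False by auto
    qed
  qed
  also have "\<dots> = (if p mod N = 0 \<and> j mod N = k mod N \<and> l mod N = k mod N then Xv N i i q z else 0)"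
    using N by (simp add: sum2_delta)
  finally show "adj N (Xv N i j p) (Xv N k l q) z = (if p mod N = 0 \<and> j mod N = k mod N \<and> l mod N = k mod N then Xv N i i q else (\<lambda>_. 0)) z"
    by simp
qed

lemma sum_p_collapse: "(\<Sum>p\<in>{0..<N}. \<Sum>a\<in>{0..<N}. \<Sum>b\<in>{0..<N}. if (a+b) mod N = p mod N then G a b else 0)
   = (\<Sum>a\<in>{0..<N}. \<Sum>b\<in>{0..<N}. G a b)"
proof -
  have "(\<Sum>p\<in>{0..<N}. \<Sum>a\<in>{0..<N}. \<Sum>b\<in>{0..<N}. if (a+b) mod N = p mod N then G a b else 0)
    = (\<Sum>a\<in>{0..<N}. \<Sum>b\<in>{0..<N}. \<Sum>p\<in>{0..<N}. if (a+b) mod N = p mod N then G a b else 0)"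
    by (rule sum_swap3)
  also have "\<dots> = (\<Sum>a\<in>{0..<N}. \<Sum>b\<in>{0..<N}. G a b)"
  proof (intro sum.cong refl)
    fix a b
    have "(\<Sum>p\<in>{0..<N}. if (a+b) mod N = p mod N then G a b else 0) = (\<Sum>p\<in>{0..<N}. if (a+b) mod N = p then G a b else 0)"
      by (intro sum.cong refl) auto
    also have "\<dots> = G a b" using N by (simp add: sum.delta)
    finally show "(\<Sum>p\<in>{0..<N}. if (a+b) mod N = p mod N then G a b else 0) = G a b" .
  qed
  finally show ?thesis .
qed

lemma Delta_Hone: "Delta N (Hone N) w = (\<Sum>i\<in>{0..<N}. \<Sum>p\<in>{0..<N}. Delta N (Xv N i i p) w)"
proof -
  have "Delta N (Hone N) w = (\<Sum>x\<in>B N. \<Sum>i\<in>{0..<N}. \<Sum>p\<in>{0..<N}. Xv N i i p x * DX N x w)"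
    unfolding Delta_def Hone_def by (simp add: sum_distrib_right)
  also have "\<dots> = (\<Sum>i\<in>{0..<N}. \<Sum>p\<in>{0..<N}. \<Sum>x\<in>B N. Xv N i i p x * DX N x w)"
    by (simp only: swapBN)
  finally show ?thesis unfolding Delta_def .
qed

lemma DHone_sum: "(\<Sum>(x,y)\<in>B N \<times> B N. Delta N (Hone N) (x,y) * F x y) =
  (\<Sum>i\<in>{0..<N}. \<Sum>a\<in>{0..<N}. \<Sum>b\<in>{0..<N}. F (i,i,a) ((i+a) mod N, (i+a) mod N, b))"
proof -
  have "(\<Sum>(x,y)\<in>B N \<times> B N. Delta N (Hone N) (x,y) * F x y) =
     (\<Sum>(x,y)\<in>B N \<times> B N. \<Sum>i\<in>{0..<N}. \<Sum>p\<in>{0..<N}. Delta N (Xv N i i p) (x,y) * F x y)"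
    by (simp add: Delta_Hone sum_distrib_right)
  also have "\<dots> = (\<Sum>i\<in>{0..<N}. \<Sum>p\<in>{0..<N}. \<Sum>(x,y)\<in>B N \<times> B N. Delta N (Xv N i i p) (x,y) * F x y)"
    by (simp only: swap_pair)
  also have "\<dots> = (\<Sum>i\<in>{0..<N}. \<Sum>p\<in>{0..<N}. \<Sum>a\<in>{0..<N}. \<Sum>b\<in>{0..<N}. if (a+b) mod N = p mod N
     then F (i, i, a) ((i+a) mod N, (i+a) mod N, b) else 0)"
  proof (intro sum.cong refl)
    fix i p assume i: "i \<in> {0..<N}"
    show "(\<Sum>(x,y)\<in>B N \<times> B N. Delta N (Xv N i i p) (x,y) * F x y) = (\<Sum>a\<in>{0..<N}. \<Sum>b\<in>{0..<N}. if (a+b) mod N = p mod N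
     then F (i, i, a) ((i+a) mod N, (i+a) mod N, b) else 0)"
      unfolding Delta_sum mod_in[OF i] ..
  qed
  also have "\<dots> = (\<Sum>i\<in>{0..<N}. \<Sum>a\<in>{0..<N}. \<Sum>b\<in>{0..<N}. F (i,i,a) ((i+a) mod N, (i+a) mod N, b))"
    by (simp only: sum_p_collapse)
  finally show ?thesis .
qed

lemma eps_zero[simp]: "eps N (\<lambda>_. 0) = 0" by (simp add: eps_def)

lemma eps_t_Xv: "eps_t N (Xv N i i s) = (if s mod N = 0 then (\<lambda>z. \<Sum>p\<in>{0..<N}. Xv N i i p z) else (\<lambda>_. 0))"
proof (rule ext)
  fix z
  have "eps_t N (Xv N i i s) z = (\<Sum>(x,y)\<in>B N \<times> B N. Delta N (Hone N) (x,y) * (eps N (hmult N (Xb N x) (Xv N i i s)) * Xb N y z))"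
    unfolding eps_t_def by (simp add: mult.assoc)
  also have "\<dots> = (\<Sum>i0\<in>{0..<N}. \<Sum>a\<in>{0..<N}. \<Sum>b\<in>{0..<N}.
      eps N (hmult N (Xv N i0 i0 a) (Xv N i i s)) * Xv N ((i0+a) mod N) ((i0+a) mod N) b z)"
    unfolding DHone_sum by simp
  also have "\<dots> = (\<Sum>i0\<in>{0..<N}. \<Sum>a\<in>{0..<N}. if i0 = i mod N \<and> a = s mod N then
      (\<Sum>b\<in>{0..<N}. if s mod N = 0 then Xv N i i b z else 0) else 0)"
  proof (intro sum.cong refl)
    fix i0 a assume i0: "i0 \<in> {0..<N}" and a: "a \<in> {0..<N}"
    show "(\<Sum>b\<in>{0..<N}. eps N (hmult N (Xv N i0 i0 a) (Xv N i i s)) * Xv N ((i0+a) mod N) ((i0+a) mod N) b z) =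
      (if i0 = i mod N \<and> a = s mod N then (\<Sum>b\<in>{0..<N}. if s mod N = 0 then Xv N i i b z else 0) else 0)"
    proof (cases "i0 = i mod N \<and> a = s mod N")
      case True
      then have "(i0 + a) mod N = (i + s) mod N" by (simp add: mod_add_eq)
      then show ?thesis using True by (auto simp: hmult_Xv eps_Xv intro!: sum.cong Xv_cong_app)
    next
      case False
      then have "\<not> (i0 mod N = i mod N \<and> a mod N = s mod N)" using i0 a by simp
      then have "hmult N (Xv N i0 i0 a) (Xv N i i s) = (\<lambda>_. 0)" unfolding hmult_Xv by (simp only: if_False)
      then show ?thesis using False by (simp only: if_False) simp
    qed
  qed
  also have "\<dots> = (if s mod N = 0 then (\<lambda>z. \<Sum>p\<in>{0..<N}. Xv N i i p z) else (\<lambda>_. 0)) z"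
    using N by (simp add: sum2_delta)
  finally show "eps_t N (Xv N i i s) z = (if s mod N = 0 then (\<lambda>z. \<Sum>p\<in>{0..<N}. Xv N i i p z) else (\<lambda>_. 0)) z" .
qed

lemma bmult_Xv: "bmult N (Xv N i i p) (Xv N k k q) =
  (if i mod N = k mod N \<and> p mod N = q mod N then Xv N i i p else (\<lambda>_. 0))"
proof (rule ext)
  fix z
  have "bmult N (Xv N i i p) (Xv N k k q) z = (\<Sum>i0\<in>{0..<N}. \<Sum>a\<in>{0..<N}. \<Sum>b\<in>{0..<N}.
      hmult N (adj N (Xv N i0 i0 a) (Xv N i i p)) (adj N (Xv N ((i0+a) mod N) ((i0+a) mod N) b) (Xv N k k q)) z)"
    unfolding bmult_def DHone_sum by simp
  also have "\<dots> = (\<Sum>i0\<in>{0..<N}. \<Sum>a\<in>{0..<N}. \<Sum>b\<in>{0..<N}. if i0 = i mod N \<and> a = 0 \<and> b = 0 then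
      (if i mod N = k mod N \<and> p mod N = q mod N then Xv N i i p z else 0) else 0)"
  proof (intro sum.cong refl)
    fix i0 a b assume i0: "i0 \<in> {0..<N}" and a: "a \<in> {0..<N}" and b: "b \<in> {0..<N}"
    show "hmult N (adj N (Xv N i0 i0 a) (Xv N i i p)) (adj N (Xv N ((i0+a) mod N) ((i0+a) mod N) b) (Xv N k k q)) z =
      (if i0 = i mod N \<and> a = 0 \<and> b = 0 then
      (if i mod N = k mod N \<and> p mod N = q mod N then Xv N i i p z else 0) else 0)"
      using i0 a b by (auto simp: adj_Xv hmult_Xv hmult_if intro: Xv_cong_app)
  qed
  also have "\<dots> = (if i mod N = k mod N \<and> p mod N = q mod N then Xv N i i p else (\<lambda>_. 0)) z"
    using N by (simp add: sum3_delta)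
  finally show "bmult N (Xv N i i p) (Xv N k k q) z = (if i mod N = k mod N \<and> p mod N = q mod N then Xv N i i p else (\<lambda>_. 0)) z" .
qed

lemma cond_bD: assumes i: "i \<in> {0..<N}" and j: "j \<in> {0..<N}" and p: "p \<in> {0..<N}" and a: "a \<in> {0..<N}"
  shows "(k mod N mod N = ((j + p) mod N + (i - j) mod N) mod N \<and> a mod N = - ((i - j) mod N) mod N
     \<and> p mod N = 0 \<and> j mod N = (k + a) mod N mod N) \<longleftrightarrow> (i = k mod N \<and> j = (k + a) mod N \<and> p = 0)"
proof -
  have e1: "((j + p) mod N + (i - j) mod N) mod N = (p + i) mod N"
  proof -
    have "((j + p) mod N + (i - j) mod N) mod N = ((j + p) + (i - j)) mod N" by (simp add: mod_add_eq)
    also have "(j + p) + (i - j) = p + i" by simp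
    finally show ?thesis .
  qed
  have e2: "(- ((i - j) mod N)) mod N = (j - i) mod N" by (simp add: mod_minus_eq)
  have "?thesis \<longleftrightarrow> ((k mod N = (p + i) mod N \<and> a = (j - i) mod N \<and> p = 0 \<and> j = (k + a) mod N)
     \<longleftrightarrow> (i = k mod N \<and> j = (k + a) mod N \<and> p = 0))"
    unfolding e1 e2 using mod_in[OF a] mod_in[OF p] mod_in[OF j] by simp
  moreover have "(k mod N = (p + i) mod N \<and> a = (j - i) mod N \<and> p = 0 \<and> j = (k + a) mod N)
     \<longleftrightarrow> (i = k mod N \<and> j = (k + a) mod N \<and> p = 0)"
  proof
    assume h: "k mod N = (p + i) mod N \<and> a = (j - i) mod N \<and> p = 0 \<and> j = (k + a) mod N"
    from h have hp: "p = 0" by blast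
    from h have hk: "k mod N = (p + i) mod N" by blast
    from h have hj: "j = (k + a) mod N" by blast
    have "i = k mod N" using hk hp mod_in[OF i] by simp
    then show "i = k mod N \<and> j = (k + a) mod N \<and> p = 0" using hp hj by blast
  next
    assume h: "i = k mod N \<and> j = (k + a) mod N \<and> p = 0"
    have "(j - i) mod N = ((k + a) mod N - k mod N) mod N" using h by simp
    also have "\<dots> = (k + a - k) mod N" by (simp add: mod_diff_eq)
    also have "\<dots> = a" using mod_in[OF a] by simp
    finally show "k mod N = (p + i) mod N \<and> a = (j - i) mod N \<and> p = 0 \<and> j = (k + a) mod N" using h by simp
  qed
  ultimately show ?thesis by (rule iffD2)
qed

lemma RSum: "(\<Sum>(r1,r2)\<in>B N \<times> B N. Rmat N \<omega> (r1,r2) * F r1 r2) =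
  (\<Sum>i\<in>{0..<N}. \<Sum>j\<in>{0..<N}. \<Sum>p\<in>{0..<N}. \<omega> powi (- (p * (i - j))) * F (i,j,p) (j, (j+p) mod N, (i-j) mod N))"
proof -
  have "(\<Sum>(r1,r2)\<in>B N \<times> B N. Rmat N \<omega> (r1,r2) * F r1 r2) =
    (\<Sum>(r1,r2)\<in>B N \<times> B N. \<Sum>i\<in>{0..<N}. \<Sum>j\<in>{0..<N}. \<Sum>p\<in>{0..<N}.
       tens (Xv N i j p) (Xv N j (j + p) (i - j)) (r1,r2) * (\<omega> powi (- (p * (i - j))) * F r1 r2))"
    unfolding Rmat_def by (simp add: sum_distrib_right mult.assoc)
  also have "\<dots> = (\<Sum>i\<in>{0..<N}. \<Sum>j\<in>{0..<N}. \<Sum>p\<in>{0..<N}. \<Sum>(r1,r2)\<in>B N \<times> B N.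
       tens (Xv N i j p) (Xv N j (j + p) (i - j)) (r1,r2) * (\<omega> powi (- (p * (i - j))) * F r1 r2))"
    by (simp only: swap_pair)
  also have "\<dots> = (\<Sum>i\<in>{0..<N}. \<Sum>j\<in>{0..<N}. \<Sum>p\<in>{0..<N}. \<omega> powi (- (p * (i - j))) * F (i,j,p) (j, (j+p) mod N, (i-j) mod N))"
  proof (intro sum.cong refl)
    fix i j p assume i: "i \<in> {0..<N}" and j: "j \<in> {0..<N}" and p: "p \<in> {0..<N}"
    show "(\<Sum>(r1,r2)\<in>B N \<times> B N.
       tens (Xv N i j p) (Xv N j (j + p) (i - j)) (r1,r2) * (\<omega> powi (- (p * (i - j))) * F r1 r2)) =
       \<omega> powi (- (p * (i - j))) * F (i,j,p) (j, (j+p) mod N, (i-j) mod N)"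
      unfolding sum_BB_tens[OF N] mod_in[OF i] mod_in[OF j] mod_in[OF p] ..
  qed
  finally show ?thesis .
qed

end

context NN begin
lemma tens_if_zero: "\<not> (P \<and> Q) \<Longrightarrow> (c::complex) * tens (if P then f else (\<lambda>_. 0)) (if Q then g else (\<lambda>_. 0)) w = 0"
  by (auto simp: tens_def split: prod.split)

lemma tens_if_true: "P \<Longrightarrow> Q \<Longrightarrow> (c::complex) * tens (if P then f else (\<lambda>_. 0)) (if Q then g else (\<lambda>_. 0)) w = c * tens f g w"
  by simp

lemma bDelta_Xv: "bDelta N \<omega> (Xv N k k s) =
         (\<lambda>w. \<Sum>v\<in>{0..<N}. \<Sum>q\<in>{0..<N}.
            if (v + q) mod N = s mod N then tens (Xv N k k v) (Xv N k k q) w else 0)"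
proof (rule ext)
  fix w
  have "bDelta N \<omega> (Xv N k k s) w = (\<Sum>(x1,x2)\<in>B N \<times> B N. Delta N (Xv N k k s) (x1,x2) *
     (\<Sum>(r1,r2)\<in>B N \<times> B N. Rmat N \<omega> (r1,r2) *
     tens (hmult N (Xb N x1) (Sant N (Xb N r2))) (adj N (Xb N r1) (Xb N x2)) w))"
    unfolding bDelta_def by (simp add: sum_distrib_left mult.assoc case_prod_beta)
  also have "\<dots> = (\<Sum>a\<in>{0..<N}. \<Sum>b\<in>{0..<N}. if (a+b) mod N = s mod N then
     (\<Sum>i\<in>{0..<N}. \<Sum>j\<in>{0..<N}. \<Sum>p\<in>{0..<N}. \<omega> powi (- (p * (i - j))) *
     tens (hmult N (Xv N (k mod N) (k mod N) a) (Sant N (Xv N j ((j+p) mod N) ((i-j) mod N))))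
          (adj N (Xv N i j p) (Xv N ((k+a) mod N) ((k+a) mod N) b)) w) else 0)"
    unfolding Delta_sum RSum by (simp only: Xb_simp)
  also have "\<dots> = (\<Sum>a\<in>{0..<N}. \<Sum>b\<in>{0..<N}. if (a+b) mod N = s mod N then
     (\<Sum>i\<in>{0..<N}. \<Sum>j\<in>{0..<N}. \<Sum>p\<in>{0..<N}. if i = k mod N \<and> j = (k + a) mod N \<and> p = 0 then
        tens (Xv N k k a) (Xv N k k b) w else 0) else 0)"
    apply (simp only: Sant_Xv hmult_Xv adj_Xv)
  proof (intro sum.cong refl if_cong)
    fix a b i j p assume a: "a \<in> {0..<N}" and i: "i \<in> {0..<N}" and j: "j \<in> {0..<N}" and p: "p \<in> {0..<N}"
    have c: "(k mod N mod N = ((j + p) mod N + (i - j) mod N) mod N \<and> a mod N = - ((i - j) mod N) mod N) \<and>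
       (p mod N = 0 \<and> j mod N = (k + a) mod N mod N \<and> (k + a) mod N mod N = (k + a) mod N mod N)
       \<longleftrightarrow> (i = k mod N \<and> j = (k + a) mod N \<and> p = 0)"
      using cond_bD[OF i j p a] by (simp only: conj_assoc simp_thms)
    show "\<omega> powi - (p * (i - j)) *
        tens (if k mod N mod N = ((j + p) mod N + (i - j) mod N) mod N \<and> a mod N = - ((i - j) mod N) mod N
              then Xv N (k mod N) (j + (i - j) mod N) a else (\<lambda>_. 0))
         (if p mod N = 0 \<and> j mod N = (k + a) mod N mod N \<and> (k + a) mod N mod N = (k + a) mod N mod N
          then Xv N i i b else (\<lambda>_. 0)) w =
       (if i = k mod N \<and> j = (k + a) mod N \<and> p = 0 then tens (Xv N k k a) (Xv N k k b) w else 0)"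
    proof (cases "i = k mod N \<and> j = (k + a) mod N \<and> p = 0")
      case True
      have x1: "Xv N (k mod N) (j + (i - j) mod N) a = Xv N k k a"
      proof -
        have "(j + (i - j) mod N) mod N = (j + (i - j)) mod N" by (rule mod_add_right_eq)
        also have "\<dots> = k mod N" using True by simp
        finally have "(j + (i - j) mod N) mod N = k mod N" .
        then show ?thesis by (rule Xv_cong[rotated]) simp_all
      qed
      have x2: "Xv N i i b = Xv N k k b" using True by simp
      have L: "(k mod N mod N = ((j + p) mod N + (i - j) mod N) mod N \<and> a mod N = - ((i - j) mod N) mod N) \<and>
       (p mod N = 0 \<and> j mod N = (k + a) mod N mod N \<and> (k + a) mod N mod N = (k + a) mod N mod N)"
        using c True by (rule iffD2)
      show ?thesis
        apply (subst tens_if_true)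
          apply (rule conjunct1[OF L])
         apply (rule conjunct2[OF L])
        unfolding x1 x2 using True by simp
    next
      case False
      have nc: "\<not> ((k mod N mod N = ((j + p) mod N + (i - j) mod N) mod N \<and> a mod N = - ((i - j) mod N) mod N) \<and>
       (p mod N = 0 \<and> j mod N = (k + a) mod N mod N \<and> (k + a) mod N mod N = (k + a) mod N mod N))"
      proof
        assume h: "(k mod N mod N = ((j + p) mod N + (i - j) mod N) mod N \<and> a mod N = - ((i - j) mod N) mod N) \<and>
          (p mod N = 0 \<and> j mod N = (k + a) mod N mod N \<and> (k + a) mod N mod N = (k + a) mod N mod N)"
        from c h have "i = k mod N \<and> j = (k + a) mod N \<and> p = 0" by (rule iffD1)
        with False show False by contradiction
      qed
      show ?thesis by (subst tens_if_zero[OF nc]) (simp add: False)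
    qed
  qed
  also have "\<dots> = (\<Sum>v\<in>{0..<N}. \<Sum>q\<in>{0..<N}.
            if (v + q) mod N = s mod N then tens (Xv N k k v) (Xv N k k q) w else 0)"
    using N by (intro sum.cong refl if_cong) (simp_all add: sum3_delta)
  finally show "bDelta N \<omega> (Xv N k k s) w = (\<Sum>v\<in>{0..<N}. \<Sum>q\<in>{0..<N}.
            if (v + q) mod N = s mod N then tens (Xv N k k v) (Xv N k k q) w else 0)" .
qed

end


lemma if_conj_split: "(if P1 \<and> P2 \<and> P3 \<and> P4 \<and> P5 \<and> P6 then T else (0::complex)) = (if P1 \<and> P2 \<and> P3 then (if P4 \<and> P5 \<and> P6 then T else 0) else 0)"
  by simp

lemma dvd_lin3: "(N::int) dvd a \<Longrightarrow> N dvd b \<Longrightarrow> N dvd c \<Longrightarrow> t = x*a + y*b + z*c \<Longrightarrow> N dvd t"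
  by (simp add: dvd_add dvd_mult)
lemma dvd_lin4: "(N::int) dvd a \<Longrightarrow> N dvd b \<Longrightarrow> N dvd c \<Longrightarrow> N dvd d \<Longrightarrow> t = x*a + y*b + z*c + u*d \<Longrightarrow> N dvd t"
  by (simp add: dvd_add dvd_mult)

lemma Sant_zero[simp]: "Sant N (\<lambda>_. 0) = (\<lambda>_. 0)" by (simp add: Sant_def)
lemma Sant_if: "Sant N (if c then A else (\<lambda>_. 0)) = (if c then Sant N A else (\<lambda>_. 0))" by simp

lemma if4_app: "(if P1 then if P2 then if P3 then if P4 then f else (\<lambda>_. 0) else (\<lambda>_. 0) else (\<lambda>_. 0) else (\<lambda>_. 0)) z = (if P1 \<and> P2 \<and> P3 \<and> P4 then f z else (0::complex))"
  by simp

context NN begin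
lemma rng_eq: "x \<in> {0..<N} \<Longrightarrow> (x = y mod N) = (N dvd (x - y))"
  by (metis mod_eq_dvd_iff mod_in mod_mod_trivial)

lemma cond_bS:
  assumes i: "i \<in> {0..<N}" and j: "j \<in> {0..<N}" and p: "p \<in> {0..<N}"
    and i': "i' \<in> {0..<N}" and j': "j' \<in> {0..<N}" and p': "p' \<in> {0..<N}"
  shows "((j mod N = k mod N \<and> p mod N = s mod N) \<and>
          (k mod N = (j' + p') mod N \<and> p mod N = (- p') mod N) \<and>
          ((j + p) mod N = j' mod N \<and> (i - j) mod N = (i' - j') mod N) \<and>
          ((j' + p') mod N = (i' + p' + p) mod N \<and> (i - j) mod N = (- p) mod N))
     \<longleftrightarrow> (i = (k - s) mod N \<and> j = k mod N \<and> p = s mod N \<and> i' = k mod N \<and> j' = (k + s) mod N \<and> p' = (- s) mod N)"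
  unfolding rng_eq[OF i] rng_eq[OF j] rng_eq[OF p] rng_eq[OF i'] rng_eq[OF j'] rng_eq[OF p'] mod_eq_dvd_iff
proof (intro iffI; elim conjE)
  assume a1: "N dvd j - k" and a2: "N dvd p - s" and b1: "N dvd k - (j' + p')" and b2: "N dvd p - - p'"
    and d1: "N dvd j' + p' - (i' + p' + p)" and d2: "N dvd i - j - - p"
  show "N dvd i - (k - s) \<and> N dvd j - k \<and> N dvd p - s \<and> N dvd i' - k \<and> N dvd j' - (k + s) \<and> N dvd p' - - s"
  proof (intro conjI)
    show "N dvd i - (k - s)" by (rule dvd_lin3[OF d2 a1 a2, where x=1 and y=1 and z="-1"]) (simp add: algebra_simps)
    show "N dvd j - k" by fact
    show "N dvd p - s" by fact
    show "N dvd i' - k" by (rule dvd_lin3[OF d1 b1 b2, where x="-1" and y="-1" and z="-1"]) (simp add: algebra_simps)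
    show "N dvd j' - (k + s)" by (rule dvd_lin3[OF b1 b2 a2, where x="-1" and y="-1" and z="1"]) (simp add: algebra_simps)
    show "N dvd p' - - s" by (rule dvd_lin3[OF b2 a2 a2, where x="1" and y="-1" and z="0"]) (simp add: algebra_simps)
  qed
next
  assume r1: "N dvd i - (k - s)" and r2: "N dvd j - k" and r3: "N dvd p - s" and r4: "N dvd i' - k"
    and r5: "N dvd j' - (k + s)" and r6: "N dvd p' - - s"
  show "(N dvd j - k \<and> N dvd p - s) \<and> (N dvd k - (j' + p') \<and> N dvd p - - p') \<and>
    (N dvd j + p - j' \<and> N dvd i - j - (i' - j')) \<and> (N dvd j' + p' - (i' + p' + p) \<and> N dvd i - j - - p)"
  proof (intro conjI)
    show "N dvd j - k" by fact
    show "N dvd p - s" by fact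
    show "N dvd k - (j' + p')" by (rule dvd_lin3[OF r5 r6 r6, where x="-1" and y="-1" and z="0"]) (simp add: algebra_simps)
    show "N dvd p - - p'" by (rule dvd_lin3[OF r3 r6 r6, where x="1" and y="1" and z="0"]) (simp add: algebra_simps)
    show "N dvd j + p - j'" by (rule dvd_lin3[OF r2 r3 r5, where x="1" and y="1" and z="-1"]) (simp add: algebra_simps)
    show "N dvd i - j - (i' - j')" by (rule dvd_lin4[OF r1 r2 r4 r5, where x="1" and y="-1" and z="-1" and u="1"]) (simp add: algebra_simps)
    show "N dvd j' + p' - (i' + p' + p)" by (rule dvd_lin3[OF r5 r4 r3, where x="1" and y="-1" and z="-1"]) (simp add: algebra_simps)
    show "N dvd i - j - - p" by (rule dvd_lin3[OF r1 r2 r3, where x="1" and y="-1" and z="1"]) (simp add: algebra_simps)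
  qed
qed
lemma powi_mod: fixes \<omega> :: complex assumes w: "\<omega> ^ nat N = 1" shows "\<omega> powi e = \<omega> powi (e mod N)"
proof -
  have w0: "\<omega> \<noteq> 0" using w N by (metis power_0_left zero_less_nat_eq zero_neq_one less_irrefl power_eq_0_iff)
  have wN: "\<omega> powi N = 1" using w N by (simp add: power_int_def)
  have "\<omega> powi e = \<omega> powi (N * (e div N) + e mod N)" by simp
  also have "\<dots> = \<omega> powi (N * (e div N)) * \<omega> powi (e mod N)" using w0 by (intro power_int_add) simp
  also have "\<omega> powi (N * (e div N)) = 1" by (simp add: power_int_mult wN)
  finally show ?thesis by simp
qed

lemma powi_dvd: fixes \<omega> :: complex assumes w: "\<omega> ^ nat N = 1" and "N dvd e" shows "\<omega> powi e = 1"
  using powi_mod[OF w, of e] assms(2) by simp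

lemma bS_Xv: fixes \<omega> :: complex assumes w: "\<omega> ^ nat N = 1" shows "bS N \<omega> (Xv N k k s) = Xv N k k (- s)"
proof (rule ext)
  fix z
  have "bS N \<omega> (Xv N k k s) z = (\<Sum>(r1,r2)\<in>B N \<times> B N. Rmat N \<omega> (r1,r2) * (\<Sum>(s1,s2)\<in>B N \<times> B N. Rmat N \<omega> (s1,s2) *
     hmult N (hmult N (Xb N r2) (Xb N s2))
       (Sant N (hmult N (hmult N (Xb N r1) (Xv N k k s)) (Sant N (Xb N s1)))) z))"
    unfolding bS_def by (simp add: sum_distrib_left mult.assoc case_prod_beta)
  also have "\<dots> = (\<Sum>i\<in>{0..<N}. \<Sum>j\<in>{0..<N}. \<Sum>p\<in>{0..<N}. \<omega> powi (- (p * (i - j))) *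
     (\<Sum>i'\<in>{0..<N}. \<Sum>j'\<in>{0..<N}. \<Sum>p'\<in>{0..<N}. \<omega> powi (- (p' * (i' - j'))) *
     hmult N (hmult N (Xv N j ((j+p) mod N) ((i-j) mod N)) (Xv N j' ((j'+p') mod N) ((i'-j') mod N)))
       (Sant N (hmult N (hmult N (Xv N i j p) (Xv N k k s)) (Sant N (Xv N i' j' p')))) z))"
    unfolding RSum by (simp only: Xb_simp)
  also have "\<dots> = (\<Sum>i\<in>{0..<N}. \<Sum>j\<in>{0..<N}. \<Sum>p\<in>{0..<N}. \<Sum>i'\<in>{0..<N}. \<Sum>j'\<in>{0..<N}. \<Sum>p'\<in>{0..<N}.
      if i = (k - s) mod N \<and> j = k mod N \<and> p = s mod N \<and> i' = k mod N \<and> j' = (k + s) mod N \<and> p' = (- s) mod N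
      then Xv N k k (- s) z else 0)"
    apply (simp only: hmult_Xv Sant_Xv hmult_if Sant_if Sant_zero hmult_zero)
    apply (simp only: mod_mod_trivial if4_app sum_distrib_left)
  proof (intro sum.cong refl)
    fix i j p i' j' p' assume i: "i \<in> {0..<N}" and j: "j \<in> {0..<N}" and p: "p \<in> {0..<N}"
      and i': "i' \<in> {0..<N}" and j': "j' \<in> {0..<N}" and p': "p' \<in> {0..<N}"
    note c = cond_bS[OF i j p i' j' p', of k s]
    show "\<omega> powi - (p * (i - j)) * (\<omega> powi - (p' * (i' - j')) *
       (if (j mod N = k mod N \<and> p mod N = s mod N) \<and>
          (k mod N = (j' + p') mod N \<and> p mod N = (- p') mod N) \<and>
          ((j + p) mod N = j' mod N \<and> (i - j) mod N = (i' - j') mod N) \<and>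
          ((j' + p') mod N = (i' + p' + p) mod N \<and> (i - j) mod N = (- p) mod N)
        then Xv N j (i + p) ((i - j) mod N) z else 0)) =
      (if i = (k - s) mod N \<and> j = k mod N \<and> p = s mod N \<and> i' = k mod N \<and> j' = (k + s) mod N \<and> p' = (- s) mod N
      then Xv N k k (- s) z else 0)"
    proof (cases "i = (k - s) mod N \<and> j = k mod N \<and> p = s mod N \<and> i' = k mod N \<and> j' = (k + s) mod N \<and> p' = (- s) mod N")
      case True
      from c True have L: "(j mod N = k mod N \<and> p mod N = s mod N) \<and>
          (k mod N = (j' + p') mod N \<and> p mod N = (- p') mod N) \<and>
          ((j + p) mod N = j' mod N \<and> (i - j) mod N = (i' - j') mod N) \<and>
          ((j' + p') mod N = (i' + p' + p) mod N \<and> (i - j) mod N = (- p) mod N)" by (rule iffD2)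
      have dA: "N dvd (p - s)" using True rng_eq[OF p] by blast
      have dI: "N dvd (i - (k - s))" using True rng_eq[OF i] by blast
      have dJ: "N dvd (j - k)" using True rng_eq[OF j] by blast
      have dP': "N dvd (p' - - s)" using True rng_eq[OF p'] by blast
      have dI': "N dvd (i' - k)" using True rng_eq[OF i'] by blast
      have dJ': "N dvd (j' - (k + s))" using True rng_eq[OF j'] by blast
      have dB: "N dvd ((i - j) + s)" by (rule dvd_lin3[OF dI dJ dJ, where x=1 and y="-1" and z=0]) (simp add: algebra_simps)
      have dD: "N dvd ((i' - j') + s)" by (rule dvd_lin3[OF dI' dJ' dJ', where x=1 and y="-1" and z=0]) (simp add: algebra_simps)
      have dE: "N dvd (- (p * (i - j)) + - (p' * (i' - j')))"
        by (rule dvd_lin4[OF dA dB dP' dD, where x=s and y="-s - (p - s)" and z=s and u="s - (p' - - s)"]) (simp add: algebra_simps)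
      have w0: "\<omega> \<noteq> 0" using w N by (metis power_0_left zero_less_nat_eq zero_neq_one less_irrefl power_eq_0_iff)
      have coef: "\<omega> powi - (p * (i - j)) * \<omega> powi - (p' * (i' - j')) = 1"
      proof -
        have h: "\<omega> powi (- (p * (i - j)) + - (p' * (i' - j'))) = \<omega> powi - (p * (i - j)) * \<omega> powi - (p' * (i' - j'))"
          using w0 by (intro power_int_add) simp
        show ?thesis using trans[OF h[symmetric] powi_dvd[OF w dE]] .
      qed
      have xv: "Xv N j (i + p) ((i - j) mod N) z = Xv N k k (- s) z"
      proof (rule Xv_cong_app)
        show "j mod N = k mod N" using True by simp
        show "(i + p) mod N = k mod N" using dvd_lin3[OF dI dA dA, where x=1 and y=1 and z=0 and t="i + p - k"]
          by (simp add: mod_eq_dvd_iff algebra_simps)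
        show "(i - j) mod N mod N = (- s) mod N" using dB by (simp add: mod_eq_dvd_iff algebra_simps)
      qed
      show ?thesis using True coef xv by (subst if_P[OF L]) (simp add: mult.assoc[symmetric])
    next
      case False
      have nL: "\<not> ((j mod N = k mod N \<and> p mod N = s mod N) \<and>
          (k mod N = (j' + p') mod N \<and> p mod N = (- p') mod N) \<and>
          ((j + p) mod N = j' mod N \<and> (i - j) mod N = (i' - j') mod N) \<and>
          ((j' + p') mod N = (i' + p' + p) mod N \<and> (i - j) mod N = (- p) mod N))"
      proof
        assume h: "(j mod N = k mod N \<and> p mod N = s mod N) \<and>
          (k mod N = (j' + p') mod N \<and> p mod N = (- p') mod N) \<and>
          ((j + p) mod N = j' mod N \<and> (i - j) mod N = (i' - j') mod N) \<and>
          ((j' + p') mod N = (i' + p' + p) mod N \<and> (i - j) mod N = (- p) mod N)"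
        from c h have "i = (k - s) mod N \<and> j = k mod N \<and> p = s mod N \<and> i' = k mod N \<and> j' = (k + s) mod N \<and> p' = (- s) mod N" by (rule iffD1)
        with False show False by contradiction
      qed
      show ?thesis by (subst if_not_P[OF nL]) (simp add: False)
    qed
  qed
  also have "\<dots> = Xv N k k (- s) z"
    using N by (simp add: sum3_delta if_conj_split sum_if0)
  finally show "bS N \<omega> (Xv N k k s) z = Xv N k k (- s) z" .
qed

end


lemma hmult_sumL: "hmult N (\<lambda>z. \<Sum>k\<in>K. F k z) g = (\<lambda>z. \<Sum>k\<in>K. hmult N (F k) g z)"
proof (rule ext)
  fix z
  have "hmult N (\<lambda>z. \<Sum>k\<in>K. F k z) g z = (\<Sum>x\<in>B N. \<Sum>y\<in>B N. \<Sum>k\<in>K. F k x * g y * mX N x y z)"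
    unfolding hmult_def by (simp add: sum_distrib_right)
  also have "\<dots> = (\<Sum>k\<in>K. hmult N (F k) g z)" unfolding hmult_def by (rule sum_swap3[symmetric])
  finally show "hmult N (\<lambda>z. \<Sum>k\<in>K. F k z) g z = (\<Sum>k\<in>K. hmult N (F k) g z)" .
qed
lemma hmult_sumR: "hmult N g (\<lambda>z. \<Sum>k\<in>K. F k z) = (\<lambda>z. \<Sum>k\<in>K. hmult N g (F k) z)"
proof (rule ext)
  fix z
  have "hmult N g (\<lambda>z. \<Sum>k\<in>K. F k z) z = (\<Sum>x\<in>B N. \<Sum>k\<in>K. \<Sum>y\<in>B N. g x * F k y * mX N x y z)"
    unfolding hmult_def by (simp add: sum_distrib_right sum_distrib_left sum.swap[of _ "B N" K])
  also have "\<dots> = (\<Sum>k\<in>K. hmult N g (F k) z)" unfolding hmult_def by (rule sum.swap)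
  finally show "hmult N g (\<lambda>z. \<Sum>k\<in>K. F k z) z = (\<Sum>k\<in>K. hmult N g (F k) z)" .
qed
lemma hmult_scalL: "hmult N (\<lambda>z. c * f z) g = (\<lambda>z. c * hmult N f g z)"
  unfolding hmult_def by (simp add: sum_distrib_left mult_ac)
lemma hmult_scalR: "hmult N g (\<lambda>z. c * f z) = (\<lambda>z. c * hmult N g f z)"
  unfolding hmult_def by (simp add: sum_distrib_left mult_ac)

lemma adj_sumR: "adj N h (\<lambda>z. \<Sum>k\<in>K. F k z) = (\<lambda>z. \<Sum>k\<in>K. adj N h (F k) z)"
  unfolding adj_def hmult_sumR hmult_sumL by (simp add: sum_distrib_left swap_pair)
lemma adj_scalR: "adj N h (\<lambda>z. c * f z) = (\<lambda>z. c * adj N h f z)"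
  unfolding adj_def hmult_scalR hmult_scalL by (simp add: sum_distrib_left mult_ac case_prod_beta)

lemma bmult_sumL: "bmult N (\<lambda>z. \<Sum>k\<in>K. F k z) g = (\<lambda>z. \<Sum>k\<in>K. bmult N (F k) g z)"
  unfolding bmult_def adj_sumR hmult_sumL by (simp add: sum_distrib_left swap_pair)
lemma bmult_sumR: "bmult N g (\<lambda>z. \<Sum>k\<in>K. F k z) = (\<lambda>z. \<Sum>k\<in>K. bmult N g (F k) z)"
  unfolding bmult_def adj_sumR hmult_sumR by (simp add: sum_distrib_left swap_pair)
lemma bmult_scalL: "bmult N (\<lambda>z. c * f z) g = (\<lambda>z. c * bmult N f g z)"
  unfolding bmult_def adj_scalR hmult_scalL by (simp add: sum_distrib_left mult_ac case_prod_beta)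
lemma bmult_scalR: "bmult N g (\<lambda>z. c * f z) = (\<lambda>z. c * bmult N g f z)"
  unfolding bmult_def adj_scalR hmult_scalR by (simp add: sum_distrib_left mult_ac case_prod_beta)

definition dg :: "int \<Rightarrow> (int \<Rightarrow> int \<Rightarrow> complex) \<Rightarrow> hvec" where
  "dg N c = (\<lambda>z. \<Sum>i\<in>{0..<N}. \<Sum>p\<in>{0..<N}. c i p * Xv N i i p z)"

context NN begin

lemma collapse_kq: assumes i: "i \<in> {0..<N}" and p: "p \<in> {0..<N}"
  shows "(\<Sum>k\<in>{0..<N}. \<Sum>q\<in>{0..<N}. d k q * (if i mod N = k mod N \<and> p mod N = q mod N then Xv N i i p else (\<lambda>_. 0)) z)
    = d i p * Xv N i i p z"
proof -
  have "(\<Sum>k\<in>{0..<N}. \<Sum>q\<in>{0..<N}. d k q * (if i mod N = k mod N \<and> p mod N = q mod N then Xv N i i p else (\<lambda>_. 0)) z)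
    = (\<Sum>k\<in>{0..<N}. \<Sum>q\<in>{0..<N}. if k = i \<and> q = p then d i p * Xv N i i p z else 0)"
    using i p by (intro sum.cong refl) auto
  also have "\<dots> = d i p * Xv N i i p z" using i p by (simp add: sum2_delta)
  finally show ?thesis .
qed

lemma collapse_kq2: assumes i: "i \<in> {0..<N}" and p: "p \<in> {0..<N}"
  shows "(\<Sum>k\<in>{0..<N}. \<Sum>q\<in>{0..<N}. d k q * (if i mod N = k mod N \<and> p mod N = q mod N then Xv N i k p else (\<lambda>_. 0)) z)
    = d i p * Xv N i i p z"
proof -
  have "(\<Sum>k\<in>{0..<N}. \<Sum>q\<in>{0..<N}. d k q * (if i mod N = k mod N \<and> p mod N = q mod N then Xv N i k p else (\<lambda>_. 0)) z)
    = (\<Sum>k\<in>{0..<N}. \<Sum>q\<in>{0..<N}. if k = i \<and> q = p then d i p * Xv N i i p z else 0)"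
    using i p by (intro sum.cong refl) auto
  also have "\<dots> = d i p * Xv N i i p z" using i p by (simp add: sum2_delta)
  finally show ?thesis .
qed

lemma collapse_kq': assumes i: "i \<in> {0..<N}" and p: "p \<in> {0..<N}"
  shows "(\<Sum>k\<in>{0..<N}. \<Sum>q\<in>{0..<N}. d k q * (if k mod N = i mod N \<and> q mod N = p mod N then Xv N k k q else (\<lambda>_. 0)) z)
    = d i p * Xv N i i p z"
proof -
  have "(\<Sum>k\<in>{0..<N}. \<Sum>q\<in>{0..<N}. d k q * (if k mod N = i mod N \<and> q mod N = p mod N then Xv N k k q else (\<lambda>_. 0)) z)
    = (\<Sum>k\<in>{0..<N}. \<Sum>q\<in>{0..<N}. if k = i \<and> q = p then d i p * Xv N i i p z else 0)"
    using i p by (intro sum.cong refl) auto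
  also have "\<dots> = d i p * Xv N i i p z" using i p by (simp add: sum2_delta)
  finally show ?thesis .
qed

lemma hmult_dg: "hmult N (dg N c) (dg N d) = dg N (\<lambda>i p. c i p * d i p)"
  unfolding dg_def
  apply (simp only: hmult_sumL hmult_scalL hmult_sumR hmult_scalR hmult_Xv)
  apply (rule ext)
  apply (intro sum.cong refl)
  apply (simp only: collapse_kq2 mult.assoc)
  done

lemma bmult_dg: "bmult N (dg N c) (dg N d) = dg N (\<lambda>i p. c i p * d i p)"
  unfolding dg_def
  apply (simp only: bmult_sumL bmult_scalL bmult_sumR bmult_scalR bmult_Xv)
  apply (rule ext)
  apply (intro sum.cong refl)
  apply (simp only: collapse_kq mult.assoc)
  done


lemma collapse_gen: fixes d :: "int \<Rightarrow> int \<Rightarrow> complex" and F :: "int \<Rightarrow> int \<Rightarrow> hvec" assumes i: "i \<in> {0..<N}" and p: "p \<in> {0..<N}"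
  shows "(\<Sum>k\<in>{0..<N}. \<Sum>q\<in>{0..<N}. d k q * (if i mod N = k mod N \<and> p mod N = q mod N then F k q else (\<lambda>_. 0)) z)
    = d i p * F i p z"
proof -
  have "(\<Sum>k\<in>{0..<N}. \<Sum>q\<in>{0..<N}. d k q * (if i mod N = k mod N \<and> p mod N = q mod N then F k q else (\<lambda>_. 0)) z)
    = (\<Sum>k\<in>{0..<N}. \<Sum>q\<in>{0..<N}. if k = i \<and> q = p then d i p * F i p z else 0)"
    using i p by (intro sum.cong refl) auto
  also have "\<dots> = d i p * F i p z" using i p by (simp add: sum2_delta)
  finally show ?thesis .
qed

lemma collapse_gen': fixes d :: "int \<Rightarrow> int \<Rightarrow> complex" and F :: "int \<Rightarrow> int \<Rightarrow> hvec" assumes i: "i \<in> {0..<N}" and p: "p \<in> {0..<N}"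
  shows "(\<Sum>k\<in>{0..<N}. \<Sum>q\<in>{0..<N}. d k q * (if k mod N = i mod N \<and> q mod N = p mod N then F k q else (\<lambda>_. 0)) z)
    = d i p * F i p z"
proof -
  have "(\<Sum>k\<in>{0..<N}. \<Sum>q\<in>{0..<N}. d k q * (if k mod N = i mod N \<and> q mod N = p mod N then F k q else (\<lambda>_. 0)) z)
    = (\<Sum>k\<in>{0..<N}. \<Sum>q\<in>{0..<N}. if k = i \<and> q = p then d i p * F i p z else 0)"
    using i p by (intro sum.cong refl) auto
  also have "\<dots> = d i p * F i p z" using i p by (simp add: sum2_delta)
  finally show ?thesis .
qed

lemma Xb_eval: "x \<in> B N \<Longrightarrow> Xb N x z = (if z = x then 1 else 0)"
  by (auto simp: B_def Xb_def Xv_def)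

lemma sum_B_Xb: "(\<Sum>x\<in>B N. f x * Xb N x z) = (if z \<in> B N then f z else 0)"
proof -
  have "(\<Sum>x\<in>B N. f x * Xb N x z) = (\<Sum>x\<in>B N. if x = z then f z else 0)"
    by (intro sum.cong refl) (auto simp: Xb_eval)
  then show ?thesis by (simp add: sum.delta)
qed

lemma Hsp_expand: "a \<in> Hsp N \<Longrightarrow> a = (\<lambda>z. \<Sum>x\<in>B N. a x * Xb N x z)"
  by (rule ext) (auto simp: sum_B_Xb Hsp_def)

lemma Xv_Hsp: "Xv N i j s \<in> Hsp N"
  using N by (auto simp: Hsp_def Xv_def B_def)

lemma dg_Hsp: "dg N c \<in> Hsp N"
proof -
  have "\<And>z i p. z \<notin> B N \<Longrightarrow> Xv N i i p z = 0" using Xv_Hsp unfolding Hsp_def by blast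
  then show ?thesis unfolding Hsp_def dg_def by simp
qed

lemma dg_cong: "(\<And>i p. i \<in> {0..<N} \<Longrightarrow> p \<in> {0..<N} \<Longrightarrow> c i p = d i p) \<Longrightarrow> dg N c = dg N d"
  unfolding dg_def by (intro ext sum.cong refl) auto

lemma eps_s_dg: "eps_s N h = dg N (\<lambda>i a. \<Sum>b\<in>{0..<N}. eps N (hmult N h (Xv N ((i+a) mod N) ((i+a) mod N) b)))"
proof (rule ext)
  fix z
  have "eps_s N h z = (\<Sum>(x,y)\<in>B N \<times> B N. Delta N (Hone N) (x,y) * (eps N (hmult N h (Xb N y)) * Xb N x z))"
    unfolding eps_s_def by (simp add: mult.assoc)
  also have "\<dots> = (\<Sum>i\<in>{0..<N}. \<Sum>a\<in>{0..<N}. \<Sum>b\<in>{0..<N}.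
      eps N (hmult N h (Xv N ((i+a) mod N) ((i+a) mod N) b)) * Xv N i i a z)"
    unfolding DHone_sum by (simp only: Xb_simp)
  also have "\<dots> = dg N (\<lambda>i a. \<Sum>b\<in>{0..<N}. eps N (hmult N h (Xv N ((i+a) mod N) ((i+a) mod N) b))) z"
    unfolding dg_def by (simp add: sum_distrib_right)
  finally show "eps_s N h z = dg N (\<lambda>i a. \<Sum>b\<in>{0..<N}. eps N (hmult N h (Xv N ((i+a) mod N) ((i+a) mod N) b))) z" .
qed

lemma Hs_dg: "y \<in> Hs N \<Longrightarrow> \<exists>c. y = dg N c"
  unfolding Hs_def using eps_s_dg by blast

lemma eps_if: "eps N (if P then X else (\<lambda>_. 0)) = (if P then eps N X else 0)" by simp

lemma em: "eps_s N (Xv N 0 m 0) = dg N (\<lambda>i a. if (i+a) mod N = m mod N then 1 else 0)"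
  unfolding eps_s_dg
proof (rule dg_cong)
  fix i a assume i: "i \<in> {0..<N}" and a: "a \<in> {0..<N}"
  have "(\<Sum>b\<in>{0..<N}. eps N (hmult N (Xv N 0 m 0) (Xv N ((i + a) mod N) ((i + a) mod N) b)))
     = (\<Sum>b\<in>{0..<N}. if b = 0 then (if (i+a) mod N = m mod N then 1 else 0) else 0)"
    by (intro sum.cong refl) (auto simp: hmult_Xv eps_if eps_Xv)
  also have "\<dots> = (if (i+a) mod N = m mod N then 1 else 0)" using N by (simp add: sum.delta)
  finally show "(\<Sum>b\<in>{0..<N}. eps N (hmult N (Xv N 0 m 0) (Xv N ((i + a) mod N) ((i + a) mod N) b)))
     = (if (i+a) mod N = m mod N then 1 else 0)" .
qed

lemma hmult_Xb_dg: assumes x: "x \<in> B N"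
  shows "hmult N (Xb N x) (dg N e) = (\<lambda>z. e (fst (snd x)) (snd (snd x)) * Xb N x z)"
proof -
  obtain x1 x2 x3 where xx: "x = (x1, x2, x3)" by (cases x) auto
  have r: "x1 \<in> {0..<N}" "x2 \<in> {0..<N}" "x3 \<in> {0..<N}" using x xx by (auto simp: B_def)
  show ?thesis unfolding xx dg_def
    apply (simp only: hmult_sumR hmult_scalR hmult_Xv Xb_simp fst_conv snd_conv)
    apply (rule ext)
    apply (rule collapse_gen[OF r(2) r(3), where F="\<lambda>k q. Xv N x1 k x3"])
    done
qed

lemma hmult_dg_Xb: assumes x: "x \<in> B N"
  shows "hmult N (dg N e) (Xb N x) = (\<lambda>z. e (fst x) (snd (snd x)) * Xb N x z)"
proof -
  obtain x1 x2 x3 where xx: "x = (x1, x2, x3)" by (cases x) auto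
  have r: "x1 \<in> {0..<N}" "x2 \<in> {0..<N}" "x3 \<in> {0..<N}" using x xx by (auto simp: B_def)
  show ?thesis unfolding xx dg_def
    apply (simp only: hmult_sumL hmult_scalL hmult_Xv Xb_simp fst_conv snd_conv)
    apply (rule ext)
    apply (rule collapse_gen'[OF r(1) r(3), where F="\<lambda>k q. Xv N k x2 q"])
    done
qed

lemma hmult_a_dg: assumes a: "a \<in> Hsp N" and z: "z \<in> B N"
  shows "hmult N a (dg N e) z = a z * e (fst (snd z)) (snd (snd z))"
proof -
  have "hmult N a (dg N e) z = (\<Sum>x\<in>B N. a x * hmult N (Xb N x) (dg N e) z)"
    by (subst Hsp_expand[OF a]) (simp only: hmult_sumL hmult_scalL)
  also have "\<dots> = (\<Sum>x\<in>B N. (a x * e (fst (snd x)) (snd (snd x))) * Xb N x z)"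
    by (intro sum.cong refl) (simp add: hmult_Xb_dg)
  also have "\<dots> = a z * e (fst (snd z)) (snd (snd z))" using z by (simp add: sum_B_Xb)
  finally show ?thesis .
qed

lemma hmult_dg_a: assumes a: "a \<in> Hsp N" and z: "z \<in> B N"
  shows "hmult N (dg N e) a z = e (fst z) (snd (snd z)) * a z"
proof -
  have "hmult N (dg N e) a z = (\<Sum>x\<in>B N. a x * hmult N (dg N e) (Xb N x) z)"
    by (subst Hsp_expand[OF a]) (simp only: hmult_sumR hmult_scalR)
  also have "\<dots> = (\<Sum>x\<in>B N. (e (fst x) (snd (snd x)) * a x) * Xb N x z)"
    by (intro sum.cong refl) (simp add: hmult_dg_Xb)
  also have "\<dots> = e (fst z) (snd (snd z)) * a z" using z by (simp add: sum_B_Xb)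
  finally show ?thesis .
qed


lemma diag_span_eq: "diag_span N = range (dg N)"
  unfolding diag_span_def dg_def by auto

lemma RH_sup: "dg N c \<in> RH N"
  unfolding RH_def
proof (intro CollectI conjI ballI)
  show "dg N c \<in> Hsp N" by (rule dg_Hsp)
  fix y assume "y \<in> Hs N"
  then obtain d where y: "y = dg N d" using Hs_dg by blast
  show "hmult N (dg N c) y = hmult N y (dg N c)" unfolding y hmult_dg by (simp add: mult.commute)
qed

lemma RH_off: assumes a: "a \<in> RH N" and z: "(i, j, p) \<in> B N" and ij: "i \<noteq> j"
  shows "a (i, j, p) = 0"
proof -
  have aH: "a \<in> Hsp N" using a unfolding RH_def by blast
  define e where "e = (\<lambda>i' a'. if (i'+a') mod N = (i+p) mod N then (1::complex) else 0)"
  have yH: "eps_s N (Xv N 0 (i+p) 0) \<in> Hs N" unfolding Hs_def using Xv_Hsp by blast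
  have ye: "eps_s N (Xv N 0 (i+p) 0) = dg N e" unfolding em e_def ..
  have "hmult N a (dg N e) = hmult N (dg N e) a" using a yH unfolding RH_def ye by blast
  then have "hmult N a (dg N e) (i, j, p) = hmult N (dg N e) a (i, j, p)" by simp
  then have eq: "a (i, j, p) * e j p = e i p * a (i, j, p)"
    using hmult_a_dg[OF aH z, of e] hmult_dg_a[OF aH z, of e] by simp
  have r: "i \<in> {0..<N}" "j \<in> {0..<N}" using z by (auto simp: B_def)
  have "(j + p) mod N \<noteq> (i + p) mod N"
  proof
    assume "(j + p) mod N = (i + p) mod N"
    then have "N dvd (j + p - (i + p))" by (simp add: mod_eq_dvd_iff)
    then have "N dvd (j - i)" by simp
    then have "j mod N = i mod N" by (simp add: mod_eq_dvd_iff)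
    then show False using r ij by simp
  qed
  then have "e j p = 0" "e i p = 1" unfolding e_def by auto
  then show ?thesis using eq by simp
qed

lemma RH_sub: assumes a: "a \<in> RH N" shows "a = dg N (\<lambda>i p. a (i, i, p))"
proof (rule ext)
  fix z :: lbl
  have aH: "a \<in> Hsp N" using a unfolding RH_def by blast
  obtain z1 z2 z3 where zz: "z = (z1, z2, z3)" by (cases z) auto
  show "a z = dg N (\<lambda>i p. a (i, i, p)) z"
  proof (cases "z \<in> B N")
    case False
    then have "a z = 0" using aH unfolding Hsp_def by blast
    moreover have "\<And>i p. Xv N i i p z = 0" using False Xv_Hsp unfolding Hsp_def by blast
    ultimately show ?thesis unfolding dg_def by simp
  next
    case True
    have r: "z1 \<in> {0..<N}" "z2 \<in> {0..<N}" "z3 \<in> {0..<N}" using True zz by (auto simp: B_def)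
    have "dg N (\<lambda>i p. a (i, i, p)) z = (\<Sum>i\<in>{0..<N}. \<Sum>p\<in>{0..<N}. if i = z1 \<and> p = z3 then
        (if z1 = z2 then a z else 0) else 0)"
      unfolding dg_def using r by (intro sum.cong refl) (auto simp: zz Xv_def)
    also have "\<dots> = (if z1 = z2 then a z else 0)" using r by (simp add: sum2_delta)
    also have "\<dots> = a z" using RH_off[OF a] True zz by auto
    finally show ?thesis ..
  qed
qed

lemma RH_eq: "RH N = diag_span N"
proof
  show "RH N \<subseteq> diag_span N" unfolding diag_span_eq using RH_sub by blast
  show "diag_span N \<subseteq> RH N" unfolding diag_span_eq using RH_sup by blast
qed

lemma Hone_dg: "Hone N = dg N (\<lambda>_ _. 1)"
  unfolding Hone_def dg_def by simp

end

theorem lemma4p1: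
  fixes N :: int and \<omega> :: complex
  assumes "N \<ge> 2"
    and "\<omega> ^ nat N = 1"
    and "\<forall>k::nat. 0 < k \<and> k < nat N \<longrightarrow> \<omega> ^ k \<noteq> 1"
  shows "RH N = diag_span N
    \<and> (\<forall>i p k q. bmult N (Xv N i i p) (Xv N k k q) =
         (if i mod N = k mod N \<and> p mod N = q mod N then Xv N i i p else (\<lambda>_. 0)))
    \<and> Hone N = (\<lambda>z. \<Sum>i\<in>{0..<N}. \<Sum>p\<in>{0..<N}. Xv N i i p z)
    \<and> (\<forall>a\<in>RH N. bmult N (Hone N) a = a \<and> bmult N a (Hone N) = a)
    \<and> (\<forall>k s. bDelta N \<omega> (Xv N k k s) =
         (\<lambda>w. \<Sum>v\<in>{0..<N}. \<Sum>q\<in>{0..<N}.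
            if (v + q) mod N = s mod N then tens (Xv N k k v) (Xv N k k q) w else 0))
    \<and> (\<forall>i s. eps_t N (Xv N i i s) =
         (if s mod N = 0 then (\<lambda>z. \<Sum>p\<in>{0..<N}. Xv N i i p z) else (\<lambda>_. 0)))
    \<and> (\<forall>k s. bS N \<omega> (Xv N k k s) = Xv N k k (- s))"
proof -
  interpret NN N using assms(1) by unfold_locales simp
  have unit: "\<forall>a\<in>RH N. bmult N (Hone N) a = a \<and> bmult N a (Hone N) = a"
  proof
    fix a assume a: "a \<in> RH N"
    have ea: "a = dg N (\<lambda>i p. a (i, i, p))" by (rule RH_sub[OF a])
    have h1: "bmult N (dg N (\<lambda>_ _. 1)) (dg N (\<lambda>i p. a (i, i, p))) = dg N (\<lambda>i p. a (i, i, p))"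
      by (simp add: bmult_dg)
    have h2: "bmult N (dg N (\<lambda>i p. a (i, i, p))) (dg N (\<lambda>_ _. 1)) = dg N (\<lambda>i p. a (i, i, p))"
      by (simp add: bmult_dg)
    show "bmult N (Hone N) a = a \<and> bmult N a (Hone N) = a"
      unfolding Hone_dg using h1 h2 by (simp only: ea[symmetric] simp_thms)
  qed
  show ?thesis
    using RH_eq bmult_Xv unit bDelta_Xv eps_t_Xv bS_Xv[OF assms(2)] by (simp add: Hone_def)
qed


end
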